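(* Let $k\ge1$, let $(A,t)$ be a $\mathcal{C}_k$-algebra, $a\in A$ and $H\subseteq A$. Then: (i) $D(a)=\big[\bigwedge_{j=1}^{k}t^j(\triangle a)\big)$, the principal lattice filter generated by $\bigwedge_{j=1}^{k}t^j(\triangle a)$; (ii) $D(H\cup\{a\})=\{x\in A: a\rightharpoondown x\in D(H)\}$; (iii) $D(a)=\{x\in A: a\rightharpoondown x=1\}$.
   Context: A modal pseudocomplemented De Morgan algebra ($mpM$-algebra) is an algebra $\langle A,\wedge,\vee,\sim,{}^\ast,0,1\rangle$ such that $\langle A,\wedge,\vee,\sim,0,1\rangle$ is a De Morgan algebra (bounded distributive lattice with $\sim\sim x=x$, $\sim(x\vee y)=\sim x\wedge\sim y$), $x^\ast$ is the pseudocomplement of $x$, and $x\vee\sim x\le x\vee x^\ast$. Put $\nabla x=\sim(\sim x\wedge x^\ast)$, $\triangle x=\sim\nabla\sim x$. A $\mathcal{C}_k$-algebra ($k\ge1$) is a pair $(A,t)$ with $A$ an $mpM$-algebra and $t$ an $mpM$-automorphism of $A$ with $t^k=\mathrm{id}$. The cyclic implication is $a\rightharpoondown b=\bigvee_{i=1}^{k}\nabla(\sim t^i(a))\vee b$. A cyclic deductive system is a set $D\subseteq A$ with $1\in D$ such that $x,\,x\rightharpoondown y\in D$ imply $y\in D$. For $H\subseteq A$, $D(H)$ denotes the smallest cyclic deductive system containing $H$, and $D(a)=D(\{a\})$. *)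

theory Defs
  imports Main
begin

text \<open>An algebra is represented by a type 'a carrying a bounded distributive
lattice structure (inf, sup, bot = 0, top = 1) together with the De Morgan
negation neg and the pseudocomplement star.\<close>

definition mpM_algebra :: "('a::{distrib_lattice,bounded_lattice} \<Rightarrow> 'a) \<Rightarrow> ('a \<Rightarrow> 'a) \<Rightarrow> bool" where
  "mpM_algebra neg star \<longleftrightarrow>
     (\<forall>x. neg (neg x) = x) \<and>
     (\<forall>x y. neg (sup x y) = inf (neg x) (neg y)) \<and>
     (\<forall>x y. inf x y = bot \<longleftrightarrow> y \<le> star x) \<and>
     (\<forall>x. sup x (neg x) \<le> sup x (star x))"

definition mpM_automorphism ::
  "('a::{distrib_lattice,bounded_lattice} \<Rightarrow> 'a) \<Rightarrow> ('a \<Rightarrow> 'a) \<Rightarrow> ('a \<Rightarrow> 'a) \<Rightarrow> bool" where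
  "mpM_automorphism neg star t \<longleftrightarrow> bij t \<and>
     (\<forall>x y. t (inf x y) = inf (t x) (t y)) \<and>
     (\<forall>x y. t (sup x y) = sup (t x) (t y)) \<and>
     (\<forall>x. t (neg x) = neg (t x)) \<and>
     (\<forall>x. t (star x) = star (t x)) \<and>
     t bot = bot \<and> t top = top"

definition Ck_algebra ::
  "nat \<Rightarrow> ('a::{distrib_lattice,bounded_lattice} \<Rightarrow> 'a) \<Rightarrow> ('a \<Rightarrow> 'a) \<Rightarrow> ('a \<Rightarrow> 'a) \<Rightarrow> bool" where
  "Ck_algebra k neg star t \<longleftrightarrow>
     mpM_algebra neg star \<and> mpM_automorphism neg star t \<and> (t ^^ k) = id"

definition nabla :: "('a::{distrib_lattice,bounded_lattice} \<Rightarrow> 'a) \<Rightarrow> ('a \<Rightarrow> 'a) \<Rightarrow> 'a \<Rightarrow> 'a" where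
  "nabla neg star x = neg (inf (neg x) (star x))"

definition delta :: "('a::{distrib_lattice,bounded_lattice} \<Rightarrow> 'a) \<Rightarrow> ('a \<Rightarrow> 'a) \<Rightarrow> 'a \<Rightarrow> 'a" where
  "delta neg star x = neg (nabla neg star (neg x))"

definition cyc_imp ::
  "nat \<Rightarrow> ('a::{distrib_lattice,bounded_lattice} \<Rightarrow> 'a) \<Rightarrow> ('a \<Rightarrow> 'a) \<Rightarrow> ('a \<Rightarrow> 'a) \<Rightarrow> 'a \<Rightarrow> 'a \<Rightarrow> 'a" where
  "cyc_imp k neg star t a b =
     sup (Sup_fin ((\<lambda>i. nabla neg star (neg ((t ^^ i) a))) ` {1..k})) b"

definition cyclic_ds ::
  "nat \<Rightarrow> ('a::{distrib_lattice,bounded_lattice} \<Rightarrow> 'a) \<Rightarrow> ('a \<Rightarrow> 'a) \<Rightarrow> ('a \<Rightarrow> 'a) \<Rightarrow> 'a set \<Rightarrow> bool" where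
  "cyclic_ds k neg star t D \<longleftrightarrow> top \<in> D \<and>
     (\<forall>x y. x \<in> D \<longrightarrow> cyc_imp k neg star t x y \<in> D \<longrightarrow> y \<in> D)"

definition cds_gen ::
  "nat \<Rightarrow> ('a::{distrib_lattice,bounded_lattice} \<Rightarrow> 'a) \<Rightarrow> ('a \<Rightarrow> 'a) \<Rightarrow> ('a \<Rightarrow> 'a) \<Rightarrow> 'a set \<Rightarrow> 'a set" where
  "cds_gen k neg star t H = \<Inter> {D. cyclic_ds k neg star t D \<and> H \<subseteq> D}"

definition principal_filter :: "'a::order \<Rightarrow> 'a set" where
  "principal_filter c = {x. c \<le> x}"

end

theory Submission
  imports Defs
begin

locale ckl =
  fixes k :: nat and neg star t :: "'a::{distrib_lattice,bounded_lattice} \<Rightarrow> 'a"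
  assumes k1: "k \<ge> 1" and ck: "Ck_algebra k neg star t"
begin

lemma nn[simp]: "neg (neg x) = x"
  using ck unfolding Ck_algebra_def mpM_algebra_def by blast

lemma nsup[simp]: "neg (sup x y) = inf (neg x) (neg y)"
  using ck unfolding Ck_algebra_def mpM_algebra_def by blast

lemma ninf[simp]: "neg (inf x y) = sup (neg x) (neg y)"
proof -
  have "neg (inf x y) = neg (neg (sup (neg x) (neg y)))" by (simp only: nsup nn)
  also have "\<dots> = sup (neg x) (neg y)" by (rule nn)
  finally show ?thesis .
qed

lemma star_iff: "inf x y = bot \<longleftrightarrow> y \<le> star x"
  using ck unfolding Ck_algebra_def mpM_algebra_def by blast

lemma ax: "sup x (neg x) \<le> sup x (star x)"
  using ck unfolding Ck_algebra_def mpM_algebra_def by blast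

lemma neg_mono: "x \<le> y \<Longrightarrow> neg y \<le> neg x"
proof -
  assume h: "x \<le> y"
  have "neg y = neg (sup x y)" by (simp only: sup_absorb2[OF h])
  also have "\<dots> = inf (neg x) (neg y)" by (rule nsup)
  also have "\<dots> \<le> neg x" by (rule inf.cobounded1)
  finally show ?thesis .
qed

lemma nbot[simp]: "neg bot = top"
proof -
  have "neg bot \<ge> neg (neg top)" by (rule neg_mono) simp
  then show ?thesis by (simp add: top_unique)
qed

lemma ntop[simp]: "neg top = bot"
  by (metis nbot nn)

lemma x_star: "inf x (star x) = bot"
  using star_iff by blast

definition bool :: "'a \<Rightarrow> bool" where "bool x \<longleftrightarrow> inf x (neg x) = bot"

lemma bool_top: "bool x \<Longrightarrow> sup x (neg x) = top"
proof -
  assume "bool x"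
  then have "neg (inf x (neg x)) = top" unfolding bool_def by simp
  then show ?thesis by (simp add: sup_commute)
qed

lemma bool_neg: "bool x \<Longrightarrow> bool (neg x)"
  unfolding bool_def by (simp add: inf_commute)

lemma bool_inf: "bool x \<Longrightarrow> bool y \<Longrightarrow> bool (inf x y)"
  unfolding bool_def
proof -
  assume hx: "inf x (neg x) = bot" and hy: "inf y (neg y) = bot"
  have "inf (inf x y) (neg (inf x y)) = sup (inf (inf x y) (neg x)) (inf (inf x y) (neg y))"
    by (simp add: inf_sup_distrib1)
  also have "inf (inf x y) (neg x) = inf y (inf x (neg x))" by (simp add: inf_aci)
  also have "inf (inf x y) (neg y) = inf x (inf y (neg y))" by (simp add: inf_aci)
  finally show "inf (inf x y) (neg (inf x y)) = bot" using hx hy by simp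
qed

lemma nabla_bool: "bool (nabla neg star x)"
proof -
  have a1: "inf (neg x) (neg (star x)) \<le> x"
  proof -
    have "neg (sup x (star x)) \<le> neg (sup x (neg x))" by (rule neg_mono[OF ax])
    then show ?thesis by simp
  qed
  have "inf (sup x (neg (star x))) (inf (neg x) (star x)) = 
        sup (inf x (inf (neg x) (star x))) (inf (neg (star x)) (inf (neg x) (star x)))"
    by (rule inf_sup_distrib2)
  also have "\<dots> \<le> inf x (star x)"
  proof (rule sup_least)
    show "inf x (inf (neg x) (star x)) \<le> inf x (star x)"
      by (meson inf_mono order_refl inf_le2)
    have "inf (neg (star x)) (inf (neg x) (star x)) = inf (inf (neg x) (neg (star x))) (star x)"
      by (simp add: inf_aci)
    also have "\<dots> \<le> inf x (star x)" by (rule inf_mono[OF a1 order_refl])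
    finally show "inf (neg (star x)) (inf (neg x) (star x)) \<le> inf x (star x)" .
  qed
  finally show ?thesis unfolding bool_def nabla_def using x_star
    by (simp add: bot_unique)
qed

lemma delta_eq: "delta neg star x = inf x (star (neg x))"
  unfolding delta_def nabla_def by simp

lemma delta_bool: "bool (delta neg star x)"
  unfolding delta_def by (rule bool_neg[OF nabla_bool])

lemma delta_le: "delta neg star x \<le> x"
  unfolding delta_eq by simp

lemma star_anti: "x \<le> y \<Longrightarrow> star y \<le> star x"
proof -
  assume h: "x \<le> y"
  have "inf x (star y) \<le> inf y (star y)" by (rule inf_mono[OF h order_refl])
  then have "inf x (star y) = bot" using x_star[of y] by (simp add: bot_unique)
  then show ?thesis using star_iff by blast
qed

lemma delta_mono: "x \<le> y \<Longrightarrow> delta neg star x \<le> delta neg star y"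
  unfolding delta_eq using star_anti neg_mono by (meson inf_mono)

lemma star_sup: "star (sup x y) = inf (star x) (star y)"
proof (rule antisym)
  show "star (sup x y) \<le> inf (star x) (star y)" by (simp add: star_anti)
  have "inf (sup x y) (inf (star x) (star y)) = bot"
  proof -
    have "inf (sup x y) (inf (star x) (star y)) = sup (inf x (inf (star x) (star y))) (inf y (inf (star x) (star y)))"
      by (rule inf_sup_distrib2)
    also have "inf x (inf (star x) (star y)) = inf (inf x (star x)) (star y)" by (simp add: inf_aci)
    also have "inf y (inf (star x) (star y)) = inf (inf y (star y)) (star x)" by (simp add: inf_aci)
    finally show ?thesis by (simp add: x_star)
  qed
  then show "inf (star x) (star y) \<le> star (sup x y)" using star_iff by blast
qed

lemma delta_inf: "delta neg star (inf x y) = inf (delta neg star x) (delta neg star y)"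
  unfolding delta_eq by (simp add: star_sup inf_assoc inf_left_commute)

lemma delta_bool_id: "bool x \<Longrightarrow> delta neg star x = x"
  unfolding delta_eq bool_def using star_iff[of "neg x" x]
  by (simp add: inf_commute inf_absorb1)

lemma t_props: "bij t \<and> (\<forall>x y. t (inf x y) = inf (t x) (t y)) \<and>
     (\<forall>x y. t (sup x y) = sup (t x) (t y)) \<and>
     (\<forall>x. t (neg x) = neg (t x)) \<and>
     (\<forall>x. t (star x) = star (t x)) \<and>
     t bot = bot \<and> t top = top"
  using ck unfolding Ck_algebra_def mpM_automorphism_def by blast

lemma tk: "(t ^^ k) = id"
  using ck unfolding Ck_algebra_def by blast

lemma tj_inf: "(t ^^ j) (inf x y) = inf ((t ^^ j) x) ((t ^^ j) y)"
  using t_props by (induction j arbitrary: x y) auto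

lemma tj_neg: "(t ^^ j) (neg x) = neg ((t ^^ j) x)"
  using t_props by (induction j arbitrary: x) auto

lemma tj_star: "(t ^^ j) (star x) = star ((t ^^ j) x)"
  using t_props by (induction j arbitrary: x) auto

lemma tj_bot: "(t ^^ j) bot = bot"
  using t_props by (induction j) auto

lemma tj_mono: "x \<le> y \<Longrightarrow> (t ^^ j) x \<le> (t ^^ j) y"
proof -
  assume h: "x \<le> y"
  have "(t ^^ j) x = (t ^^ j) (inf x y)" by (simp only: inf_absorb1[OF h])
  also have "\<dots> = inf ((t ^^ j) x) ((t ^^ j) y)" by (rule tj_inf)
  also have "\<dots> \<le> (t ^^ j) y" by (rule inf.cobounded2)
  finally show ?thesis .
qed

lemma tj_bool: "bool x \<Longrightarrow> bool ((t ^^ j) x)"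
  unfolding bool_def by (metis tj_inf tj_neg tj_bot)

lemma tj_delta: "(t ^^ j) (delta neg star x) = delta neg star ((t ^^ j) x)"
  unfolding delta_eq by (simp add: tj_inf tj_neg tj_star)

definition C :: "'a \<Rightarrow> 'a" where
  "C x = Inf_fin ((\<lambda>j. (t ^^ j) (delta neg star x)) ` {1..k})"

lemma ne: "{1..k} \<noteq> {}" using k1 by auto

lemma C_le_iff: "z \<le> C x \<longleftrightarrow> (\<forall>j\<in>{1..k}. z \<le> (t ^^ j) (delta neg star x))"
  unfolding C_def using ne by (simp add: Inf_fin.bounded_iff)

lemma C_le: "j \<in> {1..k} \<Longrightarrow> C x \<le> (t ^^ j) (delta neg star x)"
  using C_le_iff by blast

lemma C_le_x: "C x \<le> x"
proof -
  have "C x \<le> (t ^^ k) (delta neg star x)" using C_le k1 by auto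
  also have "\<dots> \<le> x" using tk delta_le by simp
  finally show ?thesis .
qed

lemma Inf_fin_bool: "finite A \<Longrightarrow> A \<noteq> {} \<Longrightarrow> \<forall>a\<in>A. bool a \<Longrightarrow> bool (Inf_fin A)"
proof (induction A rule: finite_ne_induct)
  case (singleton x) then show ?case by simp
next
  case (insert x F) then show ?case by (simp add: bool_inf)
qed

lemma C_bool: "bool (C x)"
  unfolding C_def using ne by (intro Inf_fin_bool) (auto intro: tj_bool delta_bool)

lemma neg_Inf_fin: "finite A \<Longrightarrow> A \<noteq> {} \<Longrightarrow> neg (Inf_fin A) = Sup_fin (neg ` A)"
proof (induction A rule: finite_ne_induct)
  case (singleton x) then show ?case by simp
next
  case (insert x F) then show ?case by simp
qed

lemma cyc_eq: "cyc_imp k neg star t x y = sup (neg (C x)) y"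
proof -
  have eq: "(\<lambda>i. nabla neg star (neg ((t ^^ i) x))) = (\<lambda>i. neg ((t ^^ i) (delta neg star x)))"
  proof (rule ext)
    fix i
    have "neg ((t^^i)(delta neg star x)) = neg (delta neg star ((t^^i) x))" by (simp only: tj_delta)
    also have "\<dots> = nabla neg star (neg ((t^^i) x))" unfolding delta_def by simp
    finally show "nabla neg star (neg ((t ^^ i) x)) = neg ((t ^^ i) (delta neg star x))" by simp
  qed
  then have "Sup_fin ((\<lambda>i. nabla neg star (neg ((t ^^ i) x))) ` {1..k})
     = Sup_fin (neg ` ((\<lambda>i. (t ^^ i) (delta neg star x)) ` {1..k}))"
    by (simp only: image_image eq)
  also have "\<dots> = neg (C x)" unfolding C_def using ne by (simp add: neg_Inf_fin)
  finally show ?thesis unfolding cyc_imp_def by simp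
qed

lemma t_mono: "x \<le> y \<Longrightarrow> t x \<le> t y"
  using tj_mono[of x y 1] by simp

lemma tC_le: "t (C x) \<le> C x"
proof -
  have "\<forall>i\<in>{1..k}. t (C x) \<le> (t ^^ i) (delta neg star x)"
  proof
    fix i assume i: "i \<in> {1..k}"
    show "t (C x) \<le> (t ^^ i) (delta neg star x)"
    proof (cases "i = 1")
      case True
      have "t (C x) \<le> t ((t ^^ k) (delta neg star x))" using C_le k1 t_mono by auto
      then show ?thesis using True tk by simp
    next
      case False
      then have "i - 1 \<in> {1..k}" "i = Suc (i - 1)" using i by auto
      then have "t (C x) \<le> t ((t ^^ (i - 1)) (delta neg star x))" using C_le t_mono by auto
      then show ?thesis using \<open>i = Suc (i - 1)\<close> by (metis comp_apply funpow.simps(2))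
    qed
  qed
  then show ?thesis using C_le_iff by blast
qed

lemma tnC_le: "(t ^^ n) (C x) \<le> C x"
proof (induction n)
  case 0 then show ?case by simp
next
  case (Suc n)
  then have "t ((t ^^ n) (C x)) \<le> t (C x)" by (rule t_mono)
  then have "t ((t ^^ n) (C x)) \<le> C x" by (rule order_trans[OF _ tC_le])
  then show ?case by simp
qed

lemma C_le_tj: "j \<le> k \<Longrightarrow> C x \<le> (t ^^ j) (C x)"
proof -
  assume j: "j \<le> k"
  have "C x = (t ^^ k) (C x)" using tk by simp
  also have "\<dots> = (t ^^ j) ((t ^^ (k - j)) (C x))" using j
    by (metis funpow_add le_add_diff_inverse comp_apply)
  also have "\<dots> \<le> (t ^^ j) (C x)" by (rule tj_mono[OF tnC_le])
  finally show ?thesis .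
qed

lemma C_mono: "x \<le> y \<Longrightarrow> C x \<le> C y"
proof -
  assume h: "x \<le> y"
  have "\<forall>j\<in>{1..k}. C x \<le> (t ^^ j) (delta neg star y)"
  proof
    fix j assume j: "j \<in> {1..k}"
    have "C x \<le> (t ^^ j) (delta neg star x)" by (rule C_le[OF j])
    also have "\<dots> \<le> (t ^^ j) (delta neg star y)" by (intro tj_mono delta_mono h)
    finally show "C x \<le> (t ^^ j) (delta neg star y)" .
  qed
  then show ?thesis using C_le_iff by blast
qed

lemma C_below: "C a \<le> x \<Longrightarrow> C a \<le> C x"
proof -
  assume h: "C a \<le> x"
  have "\<forall>j\<in>{1..k}. C a \<le> (t ^^ j) (delta neg star x)"
  proof
    fix j assume j: "j \<in> {1..k}"
    have "C a \<le> (t ^^ j) (C a)" using C_le_tj j by auto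
    also have "\<dots> = (t ^^ j) (delta neg star (C a))" using delta_bool_id C_bool by simp
    also have "\<dots> \<le> (t ^^ j) (delta neg star x)" by (intro tj_mono delta_mono h)
    finally show "C a \<le> (t ^^ j) (delta neg star x)" .
  qed
  then show ?thesis using C_le_iff by blast
qed

lemma C_inf: "inf (C p) (C a) \<le> C (inf p (C a))"
proof -
  have "\<forall>j\<in>{1..k}. inf (C p) (C a) \<le> (t ^^ j) (delta neg star (inf p (C a)))"
  proof
    fix j assume j: "j \<in> {1..k}"
    have "C a \<le> (t ^^ j) (C a)" using C_le_tj j by auto
    also have "\<dots> = (t ^^ j) (delta neg star (C a))" using delta_bool_id C_bool by simp
    finally have "inf (C p) (C a) \<le> inf ((t ^^ j) (delta neg star p)) ((t ^^ j) (delta neg star (C a)))"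
      using C_le j by (meson inf_mono)
    then show "inf (C p) (C a) \<le> (t ^^ j) (delta neg star (inf p (C a)))"
      by (simp add: delta_inf tj_inf)
  qed
  then show ?thesis using C_le_iff by blast
qed

lemma top_iff: "sup (neg (C a)) x = top \<longleftrightarrow> C a \<le> x"
proof
  assume h: "sup (neg (C a)) x = top"
  have "C a = inf (C a) (sup (neg (C a)) x)" using h by simp
  also have "\<dots> = inf (C a) x" using C_bool unfolding bool_def by (simp add: inf_sup_distrib1)
  finally show "C a \<le> x" by (metis inf.cobounded2)
next
  assume "C a \<le> x"
  then have "sup (neg (C a)) (C a) \<le> sup (neg (C a)) x" by (intro sup_mono order_refl)
  then show "sup (neg (C a)) x = top" using bool_top[OF C_bool] by (simp add: sup_commute top_unique)
qed

lemma ds_mp: "cyclic_ds k neg star t D \<Longrightarrow> x \<in> D \<Longrightarrow> cyc_imp k neg star t x y \<in> D \<Longrightarrow> y \<in> D"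
  unfolding cyclic_ds_def by blast

lemma ds_top: "cyclic_ds k neg star t D \<Longrightarrow> top \<in> D"
  unfolding cyclic_ds_def by blast

lemma ds_up: "cyclic_ds k neg star t D \<Longrightarrow> x \<in> D \<Longrightarrow> x \<le> y \<Longrightarrow> y \<in> D"
proof -
  assume D: "cyclic_ds k neg star t D" and x: "x \<in> D" and le: "x \<le> y"
  have "C x \<le> y" using C_le_x le by (rule order_trans)
  then have "cyc_imp k neg star t x y = top" using top_iff cyc_eq by simp
  then show "y \<in> D" using ds_mp[OF D x] ds_top[OF D] by simp
qed

lemma gen_ds: "cyclic_ds k neg star t (cds_gen k neg star t H)"
  unfolding cyclic_ds_def cds_gen_def by auto

lemma gen_sub: "H \<subseteq> cds_gen k neg star t H"
  unfolding cds_gen_def by auto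

lemma gen_min: "cyclic_ds k neg star t D \<Longrightarrow> H \<subseteq> D \<Longrightarrow> cds_gen k neg star t H \<subseteq> D"
  unfolding cds_gen_def by auto

lemma gen_mono: "H \<subseteq> G \<Longrightarrow> cds_gen k neg star t H \<subseteq> cds_gen k neg star t G"
  unfolding cds_gen_def by auto

lemma part1: "cds_gen k neg star t {a} = principal_filter (C a)"
proof
  show "cds_gen k neg star t {a} \<subseteq> principal_filter (C a)"
  proof (rule gen_min)
    show "{a} \<subseteq> principal_filter (C a)" using C_le_x unfolding principal_filter_def by auto
    show "cyclic_ds k neg star t (principal_filter (C a))"
      unfolding cyclic_ds_def principal_filter_def
    proof (intro conjI allI impI; simp)
      fix x y assume x: "C a \<le> x" and xy: "C a \<le> cyc_imp k neg star t x y"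
      have "C a \<le> C x" using C_below x .
      then have "C a \<le> inf (C x) (sup (neg (C x)) y)" using xy cyc_eq by simp
      also have "\<dots> = inf (C x) y" using C_bool[of x] unfolding bool_def
        by (simp add: inf_sup_distrib1)
      finally show "C a \<le> y" by simp
    qed
  qed
  show "principal_filter (C a) \<subseteq> cds_gen k neg star t {a}"
  proof
    fix x assume "x \<in> principal_filter (C a)"
    then have "C a \<le> x" unfolding principal_filter_def by simp
    then have "cyc_imp k neg star t a x = top" using top_iff cyc_eq by simp
    then have ci: "cyc_imp k neg star t a x \<in> cds_gen k neg star t {a}"
      using ds_top[OF gen_ds] by simp
    have ai: "a \<in> cds_gen k neg star t {a}" using gen_sub[of "{a}"] by blast
    show "x \<in> cds_gen k neg star t {a}" by (rule ds_mp[OF gen_ds ai ci])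
  qed
qed

lemma part3: "cds_gen k neg star t {a} = {x. cyc_imp k neg star t a x = top}"
  by (simp only: part1 principal_filter_def cyc_eq top_iff)

lemma part2: "cds_gen k neg star t (H \<union> {a}) = {x. cyc_imp k neg star t a x \<in> cds_gen k neg star t H}"
proof
  let ?D = "cds_gen k neg star t H"
  let ?c = "C a"
  have Dds: "cyclic_ds k neg star t ?D" by (rule gen_ds)
  show "cds_gen k neg star t (H \<union> {a}) \<subseteq> {x. cyc_imp k neg star t a x \<in> ?D}"
  proof (rule gen_min)
    show "H \<union> {a} \<subseteq> {x. cyc_imp k neg star t a x \<in> ?D}"
    proof
      fix x assume "x \<in> H \<union> {a}"
      then show "x \<in> {x. cyc_imp k neg star t a x \<in> ?D}"
      proof
        assume "x \<in> H"
        then have "x \<in> ?D" using gen_sub by auto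
        then show ?thesis using ds_up[OF Dds] cyc_eq by simp
      next
        assume "x \<in> {a}"
        then have "cyc_imp k neg star t a x = top" using top_iff cyc_eq C_le_x by simp
        then show ?thesis using Dds unfolding cyclic_ds_def by simp
      qed
    qed
    show "cyclic_ds k neg star t {x. cyc_imp k neg star t a x \<in> ?D}"
      unfolding cyclic_ds_def
    proof (intro conjI allI impI; simp)
      show "cyc_imp k neg star t a top \<in> ?D" using Dds cyc_eq unfolding cyclic_ds_def by simp
      fix x y assume x: "cyc_imp k neg star t a x \<in> ?D"
        and xy: "cyc_imp k neg star t a (cyc_imp k neg star t x y) \<in> ?D"
      define p where "p = sup (neg ?c) x"
      have pD: "p \<in> ?D" using x cyc_eq p_def by simp
      have e1: "inf p ?c = sup (inf (neg ?c) ?c) (inf x ?c)" unfolding p_def by (rule inf_sup_distrib2)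
      have "inf (neg ?c) ?c = bot" using C_bool[of a] unfolding bool_def by (simp add: inf_commute)
      with e1 have "inf p ?c = inf x ?c" by simp
      then have "inf p ?c \<le> x" by simp
      then have "C (inf p ?c) \<le> C x" by (rule C_mono)
      with C_inf[of p a] have "inf (C p) ?c \<le> C x" by (rule order_trans)
      then have "neg (C x) \<le> sup (neg (C p)) (neg ?c)" using neg_mono by fastforce
      then have h: "neg (C x) \<le> sup (neg (C p)) (neg ?c)" .
      have "sup (neg ?c) (sup (neg (C x)) y) \<le> sup (neg (C p)) (sup (neg ?c) y)"
      proof (intro sup_least)
        show "neg ?c \<le> sup (neg (C p)) (sup (neg ?c) y)" by (intro le_supI2 sup.cobounded1)
        show "y \<le> sup (neg (C p)) (sup (neg ?c) y)" by (intro le_supI2 sup.cobounded2)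
        have "sup (neg (C p)) (neg ?c) \<le> sup (neg (C p)) (sup (neg ?c) y)"
          by (intro sup_mono order_refl sup.cobounded1)
        with h show "neg (C x) \<le> sup (neg (C p)) (sup (neg ?c) y)" by (rule order_trans)
      qed
      moreover have "sup (neg ?c) (sup (neg (C x)) y) \<in> ?D" using xy cyc_eq by simp
      ultimately have "sup (neg (C p)) (sup (neg ?c) y) \<in> ?D" using ds_up[OF Dds] by blast
      then have "cyc_imp k neg star t p (sup (neg ?c) y) \<in> ?D" using cyc_eq by simp
      then have "sup (neg ?c) y \<in> ?D" using Dds pD unfolding cyclic_ds_def by blast
      then show "cyc_imp k neg star t a y \<in> ?D" using cyc_eq by simp
    qed
  qed
  show "{x. cyc_imp k neg star t a x \<in> ?D} \<subseteq> cds_gen k neg star t (H \<union> {a})"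
  proof
    fix x assume "x \<in> {x. cyc_imp k neg star t a x \<in> ?D}"
    then have ci: "cyc_imp k neg star t a x \<in> cds_gen k neg star t (H \<union> {a})"
      using gen_mono[of H "H \<union> {a}"] by auto
    have ai: "a \<in> cds_gen k neg star t (H \<union> {a})" using gen_sub[of "H \<union> {a}"] by blast
    show "x \<in> cds_gen k neg star t (H \<union> {a})"
      by (rule ds_mp[OF gen_ds ai ci])
  qed
qed

end

theorem lemma4p1:
  fixes k :: nat and neg star t :: "'a::{distrib_lattice,bounded_lattice} \<Rightarrow> 'a"
    and a :: 'a and H :: "'a set"
  assumes "k \<ge> 1" and "Ck_algebra k neg star t"
  shows "(cds_gen k neg star t {a} =
           principal_filter (Inf_fin ((\<lambda>j. (t ^^ j) (delta neg star a)) ` {1..k})))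
    \<and> (cds_gen k neg star t (H \<union> {a}) =
           {x. cyc_imp k neg star t a x \<in> cds_gen k neg star t H})
    \<and> (cds_gen k neg star t {a} = {x. cyc_imp k neg star t a x = top})"
proof -
  interpret ckl k neg star t using assms by unfold_locales
  have p1: "cds_gen k neg star t {a} =
           principal_filter (Inf_fin ((\<lambda>j. (t ^^ j) (delta neg star a)) ` {1..k}))"
    using part1[of a] unfolding C_def .
  show ?thesis
    apply (intro conjI)
      apply (rule p1)
     apply (rule part2)
    apply (rule part3)
    done
qed

end
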